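(* Let $w=w_1\cdots w_n$ be a word of length $n\ge 2$ and let $\mathrm{A}\ne\mathrm{M}$ be two letters used in $w$. Let $T=\{i\in[n]: w_i=\mathrm{A},\ w_{n-i+1}=\mathrm{M}\}$ and $t=|T|$. Then $f(w)\ge 4t$. Moreover, if $w$ uses only the letters $\mathrm{A}$ and $\mathrm{M}$, then $f(w)\ge n+t$.
   Context: A word of length $n$ is a sequence $w=w_1w_2\cdots w_n$ of letters (symbols). Let $[n]=\{1,\dots,n\}$. An $n$-grid is a function $G:[n]^2\to\Sigma$, where $\Sigma$ is an arbitrary set of letters. The $i$th row of $G$ contains $w$ if $G(i,j)=w_j$ for all $1\le j\le n$, or $G(i,j)=w_{n-j+1}$ for all $1\le j\le n$. The $j$th column contains $w$ if $G(i,j)=w_i$ for all $i$, or $G(i,j)=w_{n-i+1}$ for all $i$. The main diagonal contains $w$ if $G(i,i)=w_i$ for all $i$ or $G(i,i)=w_{n-i+1}$ for all $i$; the anti-diagonal contains $w$ if $G(i,n-i+1)=w_i$ for all $i$ or $G(i,n-i+1)=w_{n-i+1}$ for all $i$. Let $f(w,G)$ be the number of the $2n+2$ lines ($n$ rows, $n$ columns, $2$ diagonals) of $G$ that contain $w$, and $f(w)=\max_G f(w,G)$ over all $n$-grids $G$. *)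

theory Defs
  imports Main
begin

(* A word w_1...w_n is a list w of length n; letter w_i is  w ! (i - 1).
   An n-grid is a function G :: nat => nat => 'a, only its values on [n]^2 matter. *)

definition letter :: "'a list \<Rightarrow> nat \<Rightarrow> 'a" where
  "letter w i = w ! (i - 1)"

definition row_contains :: "'a list \<Rightarrow> (nat \<Rightarrow> nat \<Rightarrow> 'a) \<Rightarrow> nat \<Rightarrow> bool" where
  "row_contains w G i \<longleftrightarrow>
     (let n = length w in
       (\<forall>j\<in>{1..n}. G i j = letter w j) \<or> (\<forall>j\<in>{1..n}. G i j = letter w (n - j + 1)))"

definition col_contains :: "'a list \<Rightarrow> (nat \<Rightarrow> nat \<Rightarrow> 'a) \<Rightarrow> nat \<Rightarrow> bool" where
  "col_contains w G j \<longleftrightarrow>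
     (let n = length w in
       (\<forall>i\<in>{1..n}. G i j = letter w i) \<or> (\<forall>i\<in>{1..n}. G i j = letter w (n - i + 1)))"

definition diag_contains :: "'a list \<Rightarrow> (nat \<Rightarrow> nat \<Rightarrow> 'a) \<Rightarrow> bool" where
  "diag_contains w G \<longleftrightarrow>
     (let n = length w in
       (\<forall>i\<in>{1..n}. G i i = letter w i) \<or> (\<forall>i\<in>{1..n}. G i i = letter w (n - i + 1)))"

definition antidiag_contains :: "'a list \<Rightarrow> (nat \<Rightarrow> nat \<Rightarrow> 'a) \<Rightarrow> bool" where
  "antidiag_contains w G \<longleftrightarrow>
     (let n = length w in
       (\<forall>i\<in>{1..n}. G i (n - i + 1) = letter w i) \<or>
       (\<forall>i\<in>{1..n}. G i (n - i + 1) = letter w (n - i + 1)))"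

definition lines_count :: "'a list \<Rightarrow> (nat \<Rightarrow> nat \<Rightarrow> 'a) \<Rightarrow> nat" where
  "lines_count w G =
     card {i \<in> {1..length w}. row_contains w G i}
   + card {j \<in> {1..length w}. col_contains w G j}
   + (if diag_contains w G then 1 else 0)
   + (if antidiag_contains w G then 1 else 0)"

(* f(w) = max over all n-grids (the set of values is bounded by 2n+2, hence finite) *)
definition fmax :: "'a list \<Rightarrow> nat" where
  "fmax w = Max {lines_count w G | G. True}"

end

theory Submission
  imports Defs
begin

lemma fmax_ge: "lines_count w G \<le> fmax w"
proof -
  let ?n = "length w"
  have b: "lines_count w H \<le> 2 * ?n + 2" for H
  proof -
    have "card {i \<in> {1..?n}. row_contains w H i} \<le> card {1..?n}"
      by (rule card_mono) auto
    moreover have "card {j \<in> {1..?n}. col_contains w H j} \<le> card {1..?n}"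
      by (rule card_mono) auto
    ultimately show ?thesis unfolding lines_count_def by auto
  qed
  have "finite {lines_count w G | G. True}"
  proof (rule finite_subset)
    show "{lines_count w G | G. True} \<subseteq> {..2 * ?n + 2}" using b by blast
  qed auto
  then show ?thesis unfolding fmax_def by (rule Max_ge) auto
qed

theorem lemma10:
  fixes w :: "'a list" and A M :: 'a
  assumes "length w \<ge> 2"
    and "A \<noteq> M" and "A \<in> set w" and "M \<in> set w"
  defines "t \<equiv> card {i \<in> {1..length w}. letter w i = A \<and> letter w (length w - i + 1) = M}"
  shows "fmax w \<ge> 4 * t \<and> (set w \<subseteq> {A, M} \<longrightarrow> fmax w \<ge> length w + t)"
proof -
  define n where "n = length w"
  define T where "T = {i \<in> {1..n}. letter w i = A \<and> letter w (n - i + 1) = M}"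
  have tT: "t = card T" unfolding t_def T_def n_def ..
  define r where "r i = n - i + 1" for i
  have rr: "i \<in> {1..n} \<Longrightarrow> r (r i) = i" for i unfolding r_def by auto
  have rin: "i \<in> {1..n} \<Longrightarrow> r i \<in> {1..n}" for i unfolding r_def by auto
  define T' where "T' = r ` T"
  have TA: "i \<in> T \<Longrightarrow> letter w i = A \<and> letter w (r i) = M \<and> i \<in> {1..n}" for i
    unfolding T_def r_def by auto
  have T'A: "i \<in> T' \<Longrightarrow> letter w i = M \<and> letter w (r i) = A \<and> i \<in> {1..n}" for i
  proof -
    assume "i \<in> T'"
    then obtain k where k: "k \<in> T" "i = r k" unfolding T'_def by auto
    show ?thesis using TA[OF k(1)] rr[of k] rin[of k] k(2) by simp
  qed
  have disj: "T \<inter> T' = {}"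
  proof -
    { fix i assume "i \<in> T" "i \<in> T'"
      then have False using TA[of i] T'A[of i] assms(2) by simp }
    then show ?thesis by blast
  qed
  have finT: "finite T" unfolding T_def by auto
  have injr: "inj_on r T"
  proof (rule inj_onI)
    fix x y assume "x \<in> T" "y \<in> T" "r x = r y"
    then show "x = y" using TA[of x] TA[of y] rr[of x] rr[of y] by metis
  qed
  have cT': "card T' = t" unfolding T'_def tT using card_image[OF injr] .
  have cR: "card (T \<union> T') = 2 * t"
  proof -
    have "finite T'" unfolding T'_def using finT by simp
    then show ?thesis using card_Un_disjoint[OF finT _ disj] cT' tT by simp
  qed
  have part1: "4 * t \<le> fmax w"
  proof -
    define G where "G i j = (if i \<in> T then letter w j else if i \<in> T' then letter w (n - j + 1)
        else if j \<in> T then letter w i else letter w (n - i + 1))" for i j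
    have rows: "T \<union> T' \<subseteq> {i \<in> {1..n}. row_contains w G i}"
    proof
      fix i assume i: "i \<in> T \<union> T'"
      show "i \<in> {i \<in> {1..n}. row_contains w G i}"
      proof (cases "i \<in> T")
        case True then show ?thesis using TA[OF True]
          unfolding row_contains_def G_def n_def by auto
      next
        case False then have "i \<in> T'" using i by auto
        then show ?thesis using T'A[of i] False
          unfolding row_contains_def G_def n_def by auto
      qed
    qed
    have cols: "T \<union> T' \<subseteq> {j \<in> {1..n}. col_contains w G j}"
    proof
      fix c assume c: "c \<in> T \<union> T'"
      show "c \<in> {j \<in> {1..n}. col_contains w G j}"
      proof (cases "c \<in> T")
        case True
        have "G i c = letter w i" if i: "i \<in> {1..n}" for i
        proof -
          consider "i \<in> T" | "i \<notin> T" "i \<in> T'" | "i \<notin> T" "i \<notin> T'" by blast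
          then show ?thesis
          proof cases
            case 1 then show ?thesis using TA[OF True] TA[OF 1] unfolding G_def by auto
          next
            case 2 then show ?thesis using TA[OF True] T'A[of i] unfolding G_def r_def by auto
          next
            case 3 then show ?thesis using True unfolding G_def by auto
          qed
        qed
        then show ?thesis using TA[OF True] unfolding col_contains_def n_def[symmetric] by auto
      next
        case False then have cT': "c \<in> T'" using c by auto
        have "G i c = letter w (n - i + 1)" if i: "i \<in> {1..n}" for i
        proof -
          consider "i \<in> T" | "i \<notin> T" "i \<in> T'" | "i \<notin> T" "i \<notin> T'" by blast
          then show ?thesis
          proof cases
            case 1 then show ?thesis using T'A[OF cT'] TA[OF 1] unfolding G_def r_def by auto
          next
            case 2 then show ?thesis using T'A[OF cT'] T'A[of i] unfolding G_def r_def by auto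
          next
            case 3 then show ?thesis using False unfolding G_def by auto
          qed
        qed
        then show ?thesis using T'A[OF cT'] unfolding col_contains_def n_def[symmetric] by auto
      qed
    qed
    have f1: "finite {i \<in> {1..n}. row_contains w G i}" by auto
    have f2: "finite {i \<in> {1..n}. col_contains w G i}" by auto
    have "2 * t \<le> card {i \<in> {1..n}. row_contains w G i}"
      using card_mono[OF f1 rows] cR by simp
    moreover have "2 * t \<le> card {i \<in> {1..n}. col_contains w G i}"
      using card_mono[OF f2 cols] cR by simp
    ultimately have "4 * t \<le> lines_count w G" unfolding lines_count_def n_def by simp
    then show ?thesis using fmax_ge[of w G] by linarith
  qed
  have part2: "length w + t \<le> fmax w" if sub: "set w \<subseteq> {A, M}"
  proof -
    define G where "G i j = (if letter w i = A then letter w j else letter w (n - j + 1))" for i j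
    have lw: "i \<in> {1..n} \<Longrightarrow> letter w i = A \<or> letter w i = M" for i
    proof -
      assume "i \<in> {1..n}"
      then have "i - 1 < length w" unfolding n_def by auto
      then have "w ! (i - 1) \<in> {A, M}" using sub nth_mem by blast
      then show ?thesis unfolding letter_def by auto
    qed
    have "row_contains w G i" for i
      unfolding row_contains_def G_def n_def[symmetric] Let_def by simp
    then have rows: "{i \<in> {1..n}. row_contains w G i} = {1..n}" by auto
    have cols: "T \<subseteq> {j \<in> {1..n}. col_contains w G j}"
    proof
      fix c assume c: "c \<in> T"
      have "G i c = letter w i" if "i \<in> {1..n}" for i
        using lw[OF that] TA[OF c] unfolding G_def r_def by auto
      then show "c \<in> {j \<in> {1..n}. col_contains w G j}"
        using TA[OF c] unfolding col_contains_def n_def[symmetric] by auto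
    qed
    have f2: "finite {i \<in> {1..n}. col_contains w G i}" by auto
    have "t \<le> card {i \<in> {1..n}. col_contains w G i}"
      using card_mono[OF f2 cols] tT by simp
    then have "n + t \<le> lines_count w G" unfolding lines_count_def using rows n_def by simp
    then show ?thesis using fmax_ge[of w G] n_def by linarith
  qed
  show ?thesis using part1 part2 by blast
qed

end
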